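(* Let $K$ be a field, $R=K[x,y,z]$, and let $a,b,c$ be pairwise relatively prime positive integers. Set $S=K[x^a,y^b,z^c]$ and $L=abc$. Then the ideal $\mathfrak{a}=S_{\ge L}$ of $S$ is normal, that is, $\mathfrak{a}^t=S_{\ge tL}$ for all $t\ge1$.
   Context: $S$ is graded as a subring of $R$ with the standard grading $\deg x=\deg y=\deg z=1$, so $\deg(x^{ua}y^{vb}z^{wc})=ua+vb+wc$. For an $\mathbb{N}$-graded ring $A$ and positive integer $t$, $A_{\ge t}=\bigoplus_{s\ge t}A_s$; thus $S_{\ge m}$ is the ideal of $S$ spanned by the monomials $x^{ua}y^{vb}z^{wc}$ ($u,v,w\in\mathbb{N}$) with $ua+vb+wc\ge m$. *)

theory Defs
  imports Main "HOL-Library.Poly_Mapping" "HOL-Library.Product_Plus"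
begin

text \<open>The polynomial ring R = K[x,y,z] is modelled as finitely supported maps
  from exponent triples (i,j,k) (standing for x^i y^j z^k) to coefficients in K,
  with convolution product (library Poly_Mapping).\<close>

type_synonym 'k poly3 = "(nat \<times> nat \<times> nat) \<Rightarrow>\<^sub>0 'k"

definition mdeg :: "nat \<times> nat \<times> nat \<Rightarrow> nat" where
  "mdeg e = (case e of (i, j, k) \<Rightarrow> i + j + k)"

definition subS :: "nat \<Rightarrow> nat \<Rightarrow> nat \<Rightarrow> ('k::field) poly3 set" where
  "subS a b c = {p. \<forall>e\<in>Poly_Mapping.keys p. \<exists>u v w. e = (u * a, v * b, w * c)}"

definition S_ge :: "nat \<Rightarrow> nat \<Rightarrow> nat \<Rightarrow> nat \<Rightarrow> ('k::field) poly3 set" where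
  "S_ge a b c m = {p \<in> subS a b c. \<forall>e\<in>Poly_Mapping.keys p. m \<le> mdeg e}"

definition ideal_mult :: "('r::comm_ring_1) set \<Rightarrow> 'r set \<Rightarrow> 'r set" where
  "ideal_mult I J = {(\<Sum>i<n. f i * g i) | (n::nat) (f::nat \<Rightarrow> 'r) (g::nat \<Rightarrow> 'r). \<forall>i<n. f i \<in> I \<and> g i \<in> J}"

primrec ideal_power :: "('r::comm_ring_1) set \<Rightarrow> 'r set \<Rightarrow> nat \<Rightarrow> 'r set" where
  "ideal_power A I 0 = A"
| "ideal_power A I (Suc t) = ideal_mult (ideal_power A I t) I"

end

theory Submission
  imports Defs
begin

lemma m1_aux: "0 < (c::nat) \<Longrightarrow> u + 1 \<le> c * (u div c + 1)"
proof -
  assume "0 < c"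
  hence "u mod c < c" by simp
  moreover have "c * (u div c) + u mod c = u" by simp
  moreover have "c * (u div c + 1) = c * (u div c) + c" by (simp add: algebra_simps)
  ultimately show ?thesis by linarith
qed

lemma N5g: "0<(a::nat) \<Longrightarrow> 0<b \<Longrightarrow> 0 < c \<Longrightarrow> a * b + a * c + b * c + 1 \<le> a * b * c + a + b + c"
proof -
  assume h: "0<a" "0<b" "0<c"
  have "0 \<le> (int a - 1) * (int b - 1) * (int c - 1)" using h by simp
  moreover have "(int a - 1) * (int b - 1) * (int c - 1) = int (a * b * c + a + b + c) - int (a * b + a * c + b * c + 1)"
    by (simp add: algebra_simps)
  ultimately show ?thesis by linarith
qed

lemma N1g: fixes a b c u v w X :: nat
  assumes e1: "a * u + c * w + a + c \<le> a * c * X" and e1': "a * c * X \<le> a * c * (b + 1)"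
  shows "u * a + w * c + a + c \<le> a * b * c + a * c"
proof -
  have "a * c * (b + 1) = a * b * c + a * c" by (simp add: algebra_simps)
  moreover have "a * u = u * a" "c * w = w * c" by simp_all
  ultimately show ?thesis using e1 e1' by linarith
qed
lemma N2g: fixes a b c u v w X :: nat
  assumes e1: "a * u + b * v + a + b \<le> a * b * X" and e1': "a * b * X \<le> a * b * (c + 1)"
  shows "u * a + v * b + a + b \<le> a * b * c + a * b"
proof -
  have "a * b * (c + 1) = a * b * c + a * b" by (simp add: algebra_simps)
  moreover have "a * u = u * a" "b * v = v * b" by simp_all
  ultimately show ?thesis using e1 e1' by linarith
qed
lemma N3g: fixes a b c u v w X :: nat
  assumes e1: "b * v + c * w + b + c \<le> b * c * X" and e1': "b * c * X \<le> b * c * (a + 1)"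
  shows "v * b + w * c + b + c \<le> a * b * c + b * c"
proof -
  have "b * c * (a + 1) = a * b * c + b * c" by (simp add: algebra_simps)
  moreover have "b * v = v * b" "c * w = w * c" by simp_all
  ultimately show ?thesis using e1 e1' by linarith
qed

lemma split_L:
  fixes a b c u v w :: nat
  assumes "0 < a" "0 < b" "0 < c" "2 * (a * b * c) \<le> u * a + v * b + w * c"
  shows "\<exists>i j k. i \<le> u \<and> j \<le> v \<and> k \<le> w \<and> i * a + j * b + k * c = a * b * c"
proof -
  have du: "u div c * c \<le> u" "u div b * b \<le> u" and dv: "v div c * c \<le> v" "v div a * a \<le> v"
    and dw: "w div a * a \<le> w" "w div b * b \<le> w"
    by (simp_all add: div_times_less_eq_dividend)
  consider (xz) "b \<le> u div c + w div a" | (xy) "c \<le> u div b + v div a" | (yz) "a \<le> v div c + w div b"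
    | (none) "u div c + w div a < b" "u div b + v div a < c" "v div c + w div b < a" by linarith
  then show ?thesis
  proof cases
    case xz
    define p where "p = min b (u div c)"
    have "c * p \<le> c * (u div c)" by (simp add: p_def)
    hence "c * p \<le> u" using du by (metis mult.commute order_trans)
    moreover have "a * (b - p) \<le> w"
    proof -
      have "b - p \<le> w div a" using xz by (simp add: p_def min_def; arith)
      hence "a * (b - p) \<le> a * (w div a)" by simp
      thus ?thesis using dw by (metis mult.commute order_trans)
    qed
    moreover have "(c * p) * a + 0 * b + (a * (b - p)) * c = a * b * c"
    proof -
      have "p \<le> b" by (simp add: p_def)
      then obtain q where "b = p + q" using le_Suc_ex by blast
      thus ?thesis by (simp add: algebra_simps)
    qed
    ultimately show ?thesis by blast
  next
    case xy
    define p where "p = min c (u div b)"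
    have "b * p \<le> b * (u div b)" by (simp add: p_def)
    hence "b * p \<le> u" using du by (metis mult.commute order_trans)
    moreover have "a * (c - p) \<le> v"
    proof -
      have "c - p \<le> v div a" using xy by (simp add: p_def min_def; arith)
      hence "a * (c - p) \<le> a * (v div a)" by simp
      thus ?thesis using dv by (metis mult.commute order_trans)
    qed
    moreover have "(b * p) * a + (a * (c - p)) * b + 0 * c = a * b * c"
    proof -
      have "p \<le> c" by (simp add: p_def)
      then obtain q where "c = p + q" using le_Suc_ex by blast
      thus ?thesis by (simp add: algebra_simps)
    qed
    ultimately show ?thesis by blast
  next
    case yz
    define p where "p = min a (v div c)"
    have "c * p \<le> c * (v div c)" by (simp add: p_def)
    hence "c * p \<le> v" using dv by (metis mult.commute order_trans)
    moreover have "b * (a - p) \<le> w"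
    proof -
      have "a - p \<le> w div b" using yz by (simp add: p_def min_def; arith)
      hence "b * (a - p) \<le> b * (w div b)" by simp
      thus ?thesis using dw by (metis mult.commute order_trans)
    qed
    moreover have "0 * a + (c * p) * b + (b * (a - p)) * c = a * b * c"
    proof -
      have "p \<le> a" by (simp add: p_def)
      then obtain q where "a = p + q" using le_Suc_ex by blast
      thus ?thesis by (simp add: algebra_simps)
    qed
    ultimately show ?thesis by blast
  next
    case none
    have m1: "u + 1 \<le> c * (u div c + 1)" "w + 1 \<le> a * (w div a + 1)"
         "u + 1 \<le> b * (u div b + 1)" "v + 1 \<le> a * (v div a + 1)"
         "v + 1 \<le> c * (v div c + 1)" "w + 1 \<le> b * (w div b + 1)"
      using assms(1-3) m1_aux by blast+
    have e1: "a * u + c * w + a + c \<le> a * c * (u div c + w div a + 2)"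
    proof -
      have "a * (u + 1) \<le> a * (c * (u div c + 1))" by (rule mult_le_mono2[OF m1(1)])
      moreover have "c * (w + 1) \<le> c * (a * (w div a + 1))" by (rule mult_le_mono2[OF m1(2)])
      ultimately show ?thesis by (simp add: algebra_simps)
    qed
    have e1': "a * c * (u div c + w div a + 2) \<le> a * c * (b + 1)" using none(1) by (intro mult_le_mono2) linarith
    have e2: "a * u + b * v + a + b \<le> a * b * (u div b + v div a + 2)"
    proof -
      have "a * (u + 1) \<le> a * (b * (u div b + 1))" by (rule mult_le_mono2[OF m1(3)])
      moreover have "b * (v + 1) \<le> b * (a * (v div a + 1))" by (rule mult_le_mono2[OF m1(4)])
      ultimately show ?thesis by (simp add: algebra_simps)
    qed
    have e2': "a * b * (u div b + v div a + 2) \<le> a * b * (c + 1)" using none(2) by (intro mult_le_mono2) linarith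
    have e3: "b * v + c * w + b + c \<le> b * c * (v div c + w div b + 2)"
    proof -
      have "b * (v + 1) \<le> b * (c * (v div c + 1))" by (rule mult_le_mono2[OF m1(5)])
      moreover have "c * (w + 1) \<le> c * (b * (w div b + 1))" by (rule mult_le_mono2[OF m1(6)])
      ultimately show ?thesis by (simp add: algebra_simps)
    qed
    have e3': "b * c * (v div c + w div b + 2) \<le> b * c * (a + 1)" using none(3) by (intro mult_le_mono2) linarith
    have c1: "a * c * (b + 1) = a * b * c + a * c" "a * b * (c + 1) = a * b * c + a * b"
      "b * c * (a + 1) = a * b * c + b * c" by (simp_all add: algebra_simps)
    have c2: "a * u = u * a" "c * w = w * c" "b * v = v * b" by simp_all
    have N1: "u * a + w * c + a + c \<le> a * b * c + a * c" using e1 e1' by (rule N1g)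
    have N2: "u * a + v * b + a + b \<le> a * b * c + a * b" using e2 e2' by (rule N2g)
    have N3: "v * b + w * c + b + c \<le> a * b * c + b * c" using e3 e3' by (rule N3g)
    have N5: "a * b + a * c + b * c + 1 \<le> a * b * c + a + b + c" using assms(1-3) by (rule N5g)
    show ?thesis using N1 N2 N3 N5 assms(4) by linarith
  qed
qed

definition Lat :: "nat \<Rightarrow> nat \<Rightarrow> nat \<Rightarrow> (nat \<times> nat \<times> nat) set" where
  "Lat a b c = {e. \<exists>u v w. e = (u * a, v * b, w * c)}"

lemma S_ge_alt: "S_ge a b c m = {p. \<forall>e\<in>Poly_Mapping.keys p. e \<in> Lat a b c \<and> m \<le> mdeg e}"
  unfolding S_ge_def subS_def Lat_def by auto

lemma subS_alt: "subS a b c = S_ge a b c 0"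
  unfolding S_ge_def by auto

lemma mdeg_add: "mdeg (x + y) = mdeg x + mdeg y"
  by (cases x; cases y) (auto simp: mdeg_def)

lemma Lat_add: "x \<in> Lat a b c \<Longrightarrow> y \<in> Lat a b c \<Longrightarrow> x + y \<in> Lat a b c"
  unfolding Lat_def by clarsimp (metis add_mult_distrib)

lemma sum_mem:
  assumes "\<forall>i<n. f i \<in> S_ge a b c m"
  shows "(\<Sum>i<n. f i) \<in> S_ge a b c m"
proof -
  have "Poly_Mapping.keys (\<Sum>i<n. f i) \<subseteq> (\<Union>i\<in>{..<n}. Poly_Mapping.keys (f i))" by (rule keys_sum)
  thus ?thesis using assms unfolding S_ge_alt by blast
qed

lemma mult_mem:
  assumes "p \<in> S_ge a b c m" "q \<in> S_ge a b c n"
  shows "p * q \<in> S_ge a b c (m + n)"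
  unfolding S_ge_alt mem_Collect_eq
proof
  fix e assume "e \<in> Poly_Mapping.keys (p * q)"
  then obtain x y where e: "e = x + y" and x: "x \<in> Poly_Mapping.keys p" and y: "y \<in> Poly_Mapping.keys q"
    using keys_mult by blast
  from assms x y have "x \<in> Lat a b c" "m \<le> mdeg x" "y \<in> Lat a b c" "n \<le> mdeg y"
    unfolding S_ge_alt by blast+
  thus "e \<in> Lat a b c \<and> m + n \<le> mdeg e" unfolding e by (simp add: mdeg_add Lat_add)
qed

lemma ideal_mult_sub:
  assumes "I \<subseteq> S_ge a b c m" "J \<subseteq> S_ge a b c n"
  shows "ideal_mult I J \<subseteq> (S_ge a b c (m + n) :: ('k::field) poly3 set)"
proof
  fix p :: "'k poly3" assume "p \<in> ideal_mult I J"
  then obtain k and f g :: "nat \<Rightarrow> 'k poly3" where p: "p = (\<Sum>i<k. f i * g i)" and fg: "\<forall>i<k. f i \<in> I \<and> g i \<in> J"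
    unfolding ideal_mult_def by blast
  have "\<forall>i<k. f i * g i \<in> S_ge a b c (m + n)" using fg assms mult_mem by blast
  thus "p \<in> S_ge a b c (m + n)" unfolding p by (rule sum_mem)
qed

lemma expand_poly: "(\<Sum>e\<in>Poly_Mapping.keys p. Poly_Mapping.single e (Poly_Mapping.lookup p e)) = (p :: 'a \<Rightarrow>\<^sub>0 'b::comm_monoid_add)"
proof (rule poly_mapping_eqI)
  fix x
  have "Poly_Mapping.lookup (\<Sum>e\<in>Poly_Mapping.keys p. Poly_Mapping.single e (Poly_Mapping.lookup p e)) x
     = (\<Sum>e\<in>Poly_Mapping.keys p. (if e = x then Poly_Mapping.lookup p e else 0))"
    by (simp add: lookup_sum lookup_single when_def)
  also have "\<dots> = (if x \<in> Poly_Mapping.keys p then Poly_Mapping.lookup p x else 0)"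
    by (rule sum.delta) simp
  also have "\<dots> = Poly_Mapping.lookup p x" by (simp add: in_keys_iff)
  finally show "Poly_Mapping.lookup (\<Sum>e\<in>Poly_Mapping.keys p. Poly_Mapping.single e (Poly_Mapping.lookup p e)) x = Poly_Mapping.lookup p x" .
qed

lemma single_mem:
  assumes "e \<in> Lat a b c" "m \<le> mdeg e"
  shows "Poly_Mapping.single e v \<in> S_ge a b c m"
  using assms unfolding S_ge_alt by auto

lemma one_mem: "(1 :: ('k::field) poly3) \<in> subS a b c"
  unfolding subS_alt S_ge_alt Lat_def by (auto simp: zero_prod_def intro: exI[of _ 0])

lemma decomp:
  fixes a b c :: nat
  assumes "0 < a" "0 < b" "0 < c" "1 \<le> t"
  shows "S_ge a b c (Suc t * (a * b * c)) \<subseteq>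
         ideal_mult (S_ge a b c (t * (a * b * c))) (S_ge a b c (a * b * c) :: ('k::field) poly3 set)"
proof
  fix p :: "'k poly3"
  assume p: "p \<in> S_ge a b c (Suc t * (a * b * c))"
  let ?L = "a * b * c"
  have ex: "\<exists>e1 e2. e = e2 + e1 \<and> e2 \<in> Lat a b c \<and> t * ?L \<le> mdeg e2 \<and> e1 \<in> Lat a b c \<and> ?L \<le> mdeg e1"
    if e: "e \<in> Poly_Mapping.keys p" for e
  proof -
    from p e have eL: "e \<in> Lat a b c" and dg: "Suc t * ?L \<le> mdeg e" unfolding S_ge_alt by blast+
    then obtain u v w where euvw: "e = (u * a, v * b, w * c)" unfolding Lat_def by blast
    have md: "mdeg e = u * a + v * b + w * c" using euvw by (simp add: mdeg_def)
    have "2 * ?L \<le> Suc t * ?L" using assms(4) by (intro mult_le_mono1) simp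
    hence "2 * ?L \<le> u * a + v * b + w * c" using dg md by linarith
    then obtain i j k where ijk: "i \<le> u" "j \<le> v" "k \<le> w" "i * a + j * b + k * c = ?L"
      using split_L assms(1-3) by blast
    define e1 where "e1 = (i * a, j * b, k * c)"
    define e2 where "e2 = ((u - i) * a, (v - j) * b, (w - k) * c)"
    have "e = e2 + e1" using ijk unfolding euvw e1_def e2_def by (simp add: diff_mult_distrib)
    moreover have "e1 \<in> Lat a b c" "e2 \<in> Lat a b c" unfolding Lat_def e1_def e2_def by blast+
    moreover have "mdeg e1 = ?L" using ijk by (simp add: e1_def mdeg_def)
    moreover have "t * ?L \<le> mdeg e2"
    proof -
      have "mdeg e = mdeg e2 + mdeg e1" using \<open>e = e2 + e1\<close> mdeg_add by simp
      moreover have "Suc t * ?L = t * ?L + ?L" by simp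
      ultimately show ?thesis using dg \<open>mdeg e1 = ?L\<close> by linarith
    qed
    ultimately show ?thesis by (intro exI[of _ e1] exI[of _ e2]) simp
  qed
  then obtain F G where FG: "\<forall>e\<in>Poly_Mapping.keys p. e = G e + F e \<and> G e \<in> Lat a b c \<and> t * ?L \<le> mdeg (G e) \<and> F e \<in> Lat a b c \<and> ?L \<le> mdeg (F e)"
    by metis
  obtain h where h: "bij_betw h {0..<card (Poly_Mapping.keys p)} (Poly_Mapping.keys p)"
    using ex_bij_betw_nat_finite finite_keys by blast
  define n where "n = card (Poly_Mapping.keys p)"
  define f where "f i = (Poly_Mapping.single (G (h i)) (Poly_Mapping.lookup p (h i)) :: 'k poly3)" for i
  define g where "g i = (Poly_Mapping.single (F (h i)) 1 :: 'k poly3)" for i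
  have hin: "h i \<in> Poly_Mapping.keys p" if "i < n" for i using h that unfolding n_def bij_betw_def by auto
  have "(\<Sum>i<n. f i * g i) = (\<Sum>i\<in>{0..<n}. Poly_Mapping.single (h i) (Poly_Mapping.lookup p (h i)))"
  proof -
    have "f i * g i = Poly_Mapping.single (h i) (Poly_Mapping.lookup p (h i))" if "i < n" for i
      using FG hin[OF that] unfolding f_def g_def by (simp add: mult_single)
    thus ?thesis by (simp add: lessThan_atLeast0)
  qed
  also have "\<dots> = (\<Sum>e\<in>Poly_Mapping.keys p. Poly_Mapping.single e (Poly_Mapping.lookup p e))"
    using h unfolding n_def by (rule sum.reindex_bij_betw)
  also have "\<dots> = p" by (rule expand_poly)
  finally have "p = (\<Sum>i<n. f i * g i)" by simp
  moreover have "\<forall>i<n. f i \<in> S_ge a b c (t * ?L) \<and> g i \<in> S_ge a b c ?L"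
    using FG hin unfolding f_def g_def by (auto intro: single_mem)
  ultimately show "p \<in> ideal_mult (S_ge a b c (t * ?L)) (S_ge a b c ?L)"
    unfolding ideal_mult_def by blast
qed

theorem mainTheorem17:
  fixes a b c :: nat
  assumes "0 < a" "0 < b" "0 < c"
    and "coprime a b" "coprime a c" "coprime b c"
    and "1 \<le> t"
  shows "ideal_power (subS a b c) (S_ge a b c (a * b * c) :: ('k::field) poly3 set) t
           = S_ge a b c (t * (a * b * c))"
proof -
  let ?L = "a * b * c"
  let ?I = "S_ge a b c ?L :: 'k poly3 set"
  have "ideal_power (subS a b c) ?I (Suc s) = S_ge a b c (Suc s * ?L)" for s
  proof (induction s)
    case 0
    have "ideal_mult (subS a b c) ?I = ?I"
    proof
      show "ideal_mult (subS a b c) ?I \<subseteq> ?I"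
        using ideal_mult_sub[of "subS a b c" a b c 0 ?I ?L] by (simp add: subS_alt)
    next
      show "?I \<subseteq> ideal_mult (subS a b c) ?I"
      proof
        fix p assume pI: "p \<in> ?I"
        show "p \<in> ideal_mult (subS a b c) ?I" unfolding ideal_mult_def mem_Collect_eq
          apply (rule exI[of _ 1], rule exI[of _ "\<lambda>_. 1"], rule exI[of _ "\<lambda>_. p"])
          using one_mem pI by simp
      qed
    qed
    thus ?case by simp
  next
    case (Suc s)
    have "ideal_power (subS a b c) ?I (Suc (Suc s)) = ideal_mult (S_ge a b c (Suc s * ?L)) ?I"
      using Suc by simp
    also have "\<dots> = S_ge a b c (Suc (Suc s) * ?L)"
    proof
      show "ideal_mult (S_ge a b c (Suc s * ?L)) ?I \<subseteq> S_ge a b c (Suc (Suc s) * ?L)"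
        using ideal_mult_sub[of "S_ge a b c (Suc s * ?L)" a b c "Suc s * ?L" ?I ?L] by (simp add: add.commute)
      show "S_ge a b c (Suc (Suc s) * ?L) \<subseteq> ideal_mult (S_ge a b c (Suc s * ?L)) ?I"
        using decomp[of a b c "Suc s"] assms(1-3) by simp
    qed
    finally show ?case .
  qed
  moreover obtain s where "t = Suc s" using assms(7) by (cases t) auto
  ultimately show ?thesis by simp
qed

end
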